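(* For every nonnegative integer $n$, \[ \frac{(-1)^{n+1}}{n!}\,\mathrm{Ls}_{n+1}\!\left(\frac{\pi}{3}\right) \;=\; {}_{n+2}F_{n+1}\!\left(\begin{matrix}\frac12,\ldots,\frac12\\ \frac32,\ldots,\frac32\end{matrix};\,\frac14\right) \;=\; \sum_{k=0}^\infty \frac{2^{-4k}}{(2k+1)^{n+1}}\binom{2k}{k}, \] where the hypergeometric function has $n+2$ upper parameters all equal to $\frac12$ and $n+1$ lower parameters all equal to $\frac32$. Consequently, for complex $s$ with $|s|<1$, \[ -\sum_{n=0}^\infty \mathrm{Ls}_{n+1}\!\left(\frac{\pi}{3}\right)\frac{s^n}{n!} \;=\; \frac{1}{s+1}\,{}_2F_1\!\left(\begin{matrix}\frac12,\ \frac{s}{2}+\frac12\\ \frac{s}{2}+\frac32\end{matrix};\,\frac14\right) \;=\; \sum_{k=0}^\infty \frac{2^{-4k}}{2k+1+s}\binom{2k}{k}. \]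
   Context: For integers $n\ge 1$ and real $\sigma$, the log-sine integral is $\mathrm{Ls}_n(\sigma) := -\int_0^{\sigma}\log^{n-1}\left|2\sin\frac{\theta}{2}\right|\,\mathrm{d}\theta$. ${}_pF_q$ denotes the generalized hypergeometric series $\sum_{k\ge0}\frac{(a_1)_k\cdots(a_p)_k}{(b_1)_k\cdots(b_q)_k}\frac{z^k}{k!}$ with Pochhammer symbols $(a)_k$. *)

theory Defs
  imports "HOL-Analysis.Analysis"
begin

definition Ls :: "nat \<Rightarrow> real \<Rightarrow> real" where
  "Ls n \<sigma> = - (LBINT \<theta>=0..\<sigma>. (ln \<bar>2 * sin (\<theta> / 2)\<bar>) ^ (n - 1))"

definition hypergeom :: "complex list \<Rightarrow> complex list \<Rightarrow> complex \<Rightarrow> complex" where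
  "hypergeom as bs z =
     (\<Sum>k. (\<Prod>a\<leftarrow>as. pochhammer a k) / (\<Prod>b\<leftarrow>bs. pochhammer b k) * z ^ k / fact k)"

end

theory Submission
  imports Defs "HOL-Probability.Distributions"
begin



lemma cb_aux: fixes A B C k :: nat
  assumes "Suc (Suc (2*k)) * B = A * Suc k" "Suc (2*k) * C = B2 * Suc k" "B2 = B"
  shows "A * (k+1) = 2*(2*k+1) * C"
proof -
  have "A * Suc k = 2 * B * Suc k" using assms(1) by (simp add: algebra_simps)
  then have "A = 2*B" using mult_cancel_right[of A "Suc k" "2*B"] by simp
  then show ?thesis using assms(2,3) by (simp add: algebra_simps)
qed

lemma cb_rec_nat: "((2*Suc k) choose Suc k) * (k+1) = 2*(2*k+1) * ((2*k) choose k)"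
proof (rule cb_aux)
  show "Suc (Suc (2*k)) * (Suc (2*k) choose k) = (2*Suc k choose Suc k) * Suc k"
    using Suc_times_binomial_eq[of "Suc (2*k)" k] by (simp del: binomial_Suc_Suc)
  show "Suc (2*k) * (2*k choose k) = (Suc (2*k) choose Suc k) * Suc k"
    using Suc_times_binomial_eq[of "2*k" k] by (simp del: binomial_Suc_Suc)
  show "(Suc (2*k) choose Suc k) = (Suc (2*k) choose k)"
    using binomial_symmetric[of "Suc k" "Suc (2*k)"] by (simp del: binomial_Suc_Suc)
qed

lemma poch_half: "pochhammer (1/2::'a::field_char_0) k / fact k = of_nat ((2*k) choose k) / 4^k"
proof (induction k)
  case 0 then show ?case by simp
next
  case (Suc k)
  define A where "A = ((2*Suc k) choose Suc k)"
  define C where "C = ((2*k) choose k)"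
  have cn: "A * (k+1) = 2*(2*k+1) * C" unfolding A_def C_def by (rule cb_rec_nat)
  have c: "(of_nat A :: 'a) * (of_nat k + 1) = 2 * (2 * of_nat k + 1) * of_nat C"
    using arg_cong[OF cn, of "of_nat :: nat \<Rightarrow> 'a"] by (simp add: algebra_simps)
  have "pochhammer (1/2::'a) (Suc k) / fact (Suc k) = (pochhammer (1/2) k / fact k) * ((1/2 + of_nat k) / (of_nat k + 1))"
    by (simp add: pochhammer_Suc field_simps) 
  also have "\<dots> = of_nat A / 4^Suc k"
  proof -
    have kk: "(of_nat k + 1::'a) \<noteq> 0" by (metis of_nat_Suc of_nat_eq_0_iff Zero_not_Suc add.commute)
    have "(of_nat A :: 'a) = (of_nat A * (of_nat k + 1)) / (of_nat k + 1)"
      using kk by simp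
    also have "\<dots> = 2 * (2 * of_nat k + 1) * of_nat C / (of_nat k + 1)" using c by simp
    finally have A': "(of_nat A :: 'a) = 2 * (2 * of_nat k + 1) * of_nat C / (of_nat k + 1)" .
    have gen: "\<And>q p c::'a. q \<noteq> 0 \<Longrightarrow> p \<noteq> 0 \<Longrightarrow> c/p * ((1/2 + (q-1))/q) = (2*(2*(q-1)+1)*c/q)/(4*p)"
      by (simp add: field_simps)
    have kq: "(of_nat k :: 'a) = (of_nat k + 1) - 1" by simp
    show ?thesis unfolding Suc.IH A' C_def[symmetric] power_Suc
      by (subst (1 2) kq) (rule gen[OF kk], simp)
  qed
  finally show ?case unfolding A_def .
qed


lemma term_int:
  fixes c :: real assumes c: "c > 0"
  shows "(\<integral>\<^sup>+t. ennreal ((-t)^n * exp (c*t)) * indicator {..<0} t \<partial>lborel) = ennreal (fact n / c^(n+1))"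
proof -
  let ?F = "\<lambda>t. ennreal ((-t)^n * exp (c*t)) * indicator {..<0} t"
  have "(\<integral>\<^sup>+t. ?F t \<partial>lborel) = ennreal \<bar>-1/c\<bar> * (\<integral>\<^sup>+x. ?F (0 + (-1/c) * x) \<partial>lborel)"
    by (rule nn_integral_real_affine) (use c in auto)
  also have "(\<integral>\<^sup>+x. ?F (0 + (-1/c) * x) \<partial>lborel) =
     (\<integral>\<^sup>+x. ennreal (1/c^n) * (ennreal (x^n * exp (-x)) * indicator {0..} x) \<partial>lborel)"
  proof (rule nn_integral_cong_AE)
    show "AE x in lborel. ?F (0 + (-1/c) * x) = ennreal (1/c^n) * (ennreal (x^n * exp (-x)) * indicator {0..} x)"
      using AE_lborel_singleton[of 0]
    proof eventually_elim
      case (elim x)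
      show ?case
      proof (cases "x > 0")
        case True
        have "(- (0 + - 1 / c * x)) ^ n * exp (c * (0 + - 1 / c * x)) = 1/c^n * (x^n * exp (-x))"
        proof -
          have 1: "- (0 + - 1 / c * x) = x / c" by simp
          have 2: "c * (0 + - 1 / c * x) = - x" using c by simp
          show ?thesis unfolding 1 2 power_divide by simp
        qed
        then show ?thesis using True c
          by (simp add: ennreal_mult[symmetric] indicator_def)
      next
        case False
        then show ?thesis using elim c by (simp add: indicator_def mult_less_0_iff zero_less_divide_iff)
      qed
    qed
  qed
  also have "\<dots> = ennreal (1/c^n) * (\<integral>\<^sup>+x. ennreal (x^n * exp (-x)) * indicator {0..} x \<partial>lborel)"
    by (rule nn_integral_cmult) auto
  also have "\<dots> = ennreal (1/c^n) * ennreal (fact n)"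
    by (simp add: nn_intergal_power_times_exp_Ici)
  finally show ?thesis using c
    by (simp add: ennreal_mult[symmetric] field_simps)
qed





definition ak :: "nat \<Rightarrow> real" where "ak k = real ((2*k) choose k) / 4^k / 4^k"

lemma ak_nonneg: "ak k \<ge> 0" by (simp add: ak_def)

lemma ak_le: "ak k \<le> (1/4)^k"
proof -
  have "real ((2*k) choose k) \<le> 2^(2*k)"
    using binomial_le_pow2[of "2*k" k] by (metis of_nat_le_iff of_nat_numeral of_nat_power)
  also have "(2::real)^(2*k) = 4^k" by (simp add: power_mult)
  finally show ?thesis by (simp add: ak_def divide_le_eq power_divide)
qed

lemma summable_ak_pow: "summable (\<lambda>k. ak k / (2 * real k + 1) ^ m)"
proof (rule summable_comparison_test')
  show "summable (\<lambda>k. (1/4::real)^k)" by (rule summable_geometric) simp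
  fix k
  have "ak k / (2 * real k + 1) ^ m \<le> ak k"
    using divide_left_mono[of 1 "(2 * real k + 1) ^ m" "ak k"] ak_nonneg[of k]
    by (simp add: one_le_power)
  then show "norm (ak k / (2 * real k + 1) ^ m) \<le> (1/4)^k"
    using ak_le[of k] ak_nonneg[of k] by simp
qed

lemma inv_sqrt_series:
  fixes y :: real assumes "0 \<le> y" "y < 1"
  shows "(\<lambda>k. real ((2*k) choose k) / 4^k * y^k) sums (1 / sqrt (1 - y))"
proof -
  have "(\<lambda>k. ((-1/2) gchoose k) * (-y)^k) sums ((1 + - y) powr (-1/2))"
    by (rule gen_binomial_real) (use assms in auto)
  moreover have "\<And>k. ((-1/2::real) gchoose k) * (-y)^k = real ((2*k) choose k) / 4^k * y^k"
  proof -
    fix k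
    have "((-1/2::real) gchoose k) * (-y)^k = ((-1)^k * (-1)^k) * (pochhammer (1/2) k / fact k) * y^k"
      by (simp add: gbinomial_pochhammer power_minus[of y])
    also have "(-1::real)^k * (-1)^k = 1" by (simp add: power_mult_distrib[symmetric])
    finally show "((-1/2::real) gchoose k) * (-y)^k = real ((2*k) choose k) / 4^k * y^k"
      by (simp add: poch_half)
  qed
  moreover have "(1 + - y) powr (-1/2) = 1 / sqrt (1 - y)"
    using assms by (simp add: powr_minus_divide powr_half_sqrt)
  ultimately show ?thesis by simp
qed




definition gd :: "real \<Rightarrow> real" where "gd t = exp t / sqrt (1 - (exp t / 2)^2)"
definition SS :: "nat \<Rightarrow> real" where "SS n = (\<Sum>k. ak k / (2 * real k + 1) ^ (n+1))"

lemma pointwise: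
  fixes t :: real assumes t: "t < 0"
  shows "(\<lambda>k. ak k * ((-t)^n * exp ((2 * real k + 1) * t))) sums ((-t)^n * gd t)"
proof -
  have e: "exp t < 1" using t by simp
  have "0 \<le> (exp t / 2)^2" by simp
  moreover have "(exp t / 2)^2 < 1"
  proof -
    have "exp t / 2 < 1" using e by linarith
    then have "(exp t / 2)^2 < 1^2" by (intro power_strict_mono) auto
    then show ?thesis by simp
  qed
  ultimately have "(\<lambda>k. real ((2*k) choose k) / 4^k * ((exp t / 2)^2)^k) sums (1 / sqrt (1 - (exp t / 2)^2))"
    by (rule inv_sqrt_series)
  then have "(\<lambda>k. ((-t)^n * exp t) * (real ((2*k) choose k) / 4^k * ((exp t / 2)^2)^k)) sums (((-t)^n * exp t) * (1 / sqrt (1 - (exp t / 2)^2)))"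
    by (rule sums_mult)
  moreover have "\<And>k. ((-t)^n * exp t) * (real ((2*k) choose k) / 4^k * ((exp t / 2)^2)^k) = ak k * ((-t)^n * exp ((2 * real k + 1) * t))"
  proof -
    fix k
    have "exp ((2 * real k + 1) * t) = exp t ^ (2*k+1)"
      using exp_of_nat_mult[of "2*k+1" t] by (simp add: add.commute)
    then show "((-t)^n * exp t) * (real ((2*k) choose k) / 4^k * ((exp t / 2)^2)^k) = ak k * ((-t)^n * exp ((2 * real k + 1) * t))"
      by (simp add: ak_def power_divide power_mult[symmetric] field_simps)
  qed
  ultimately show ?thesis by (simp add: gd_def)
qed

lemma nn_main:
  "(\<integral>\<^sup>+t. ennreal ((-t)^n * gd t) * indicator {..<0} t \<partial>lborel) = ennreal (fact n * SS n)"
proof -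
  let ?f = "\<lambda>k t. ennreal (ak k * ((-t)^n * exp ((2 * real k + 1) * t))) * indicator {..<0} t"
  have "(\<integral>\<^sup>+t. ennreal ((-t)^n * gd t) * indicator {..<0} t \<partial>lborel) = (\<integral>\<^sup>+t. (\<Sum>k. ?f k t) \<partial>lborel)"
  proof (rule nn_integral_cong)
    fix t :: real
    show "ennreal ((-t)^n * gd t) * indicator {..<0} t = (\<Sum>k. ?f k t)"
    proof (cases "t < 0")
      case True
      have nn: "\<And>k. 0 \<le> ak k * ((-t)^n * exp ((2 * real k + 1) * t))"
        using True ak_nonneg by (intro mult_nonneg_nonneg) auto
      have "(\<Sum>k. ennreal (ak k * ((-t)^n * exp ((2 * real k + 1) * t)))) = ennreal ((-t)^n * gd t)"
        using suminf_ennreal2[OF nn sums_summable[OF pointwise[OF True]]] sums_unique[OF pointwise[OF True]]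
        by simp
      then show ?thesis using True by simp
    next
      case False
      then show ?thesis by simp
    qed
  qed
  also have "\<dots> = (\<Sum>k. (\<integral>\<^sup>+t. ?f k t \<partial>lborel))"
    by (rule nn_integral_suminf) simp
  also have "\<dots> = (\<Sum>k. ennreal (ak k * (fact n / (2 * real k + 1)^(n+1))))"
  proof (rule suminf_cong)
    fix k
    have "(\<integral>\<^sup>+t. ?f k t \<partial>lborel) = (\<integral>\<^sup>+t. ennreal (ak k) * (ennreal ((-t)^n * exp ((2 * real k + 1) * t)) * indicator {..<0} t) \<partial>lborel)"
      by (intro nn_integral_cong) (simp add: ennreal_mult[symmetric] ak_nonneg split: split_indicator)
    also have "\<dots> = ennreal (ak k) * (\<integral>\<^sup>+t. ennreal ((-t)^n * exp ((2 * real k + 1) * t)) * indicator {..<0} t \<partial>lborel)"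
      by (rule nn_integral_cmult) simp
    also have "\<dots> = ennreal (ak k) * ennreal (fact n / (2 * real k + 1)^(n+1))"
      by (subst term_int) auto
    also have "\<dots> = ennreal (ak k * (fact n / (2 * real k + 1)^(n+1)))"
      by (simp add: ennreal_mult[symmetric] ak_nonneg)
    finally show "(\<integral>\<^sup>+t. ?f k t \<partial>lborel) = ennreal (ak k * (fact n / (2 * real k + 1)^(n+1)))" .
  qed
  also have "\<dots> = ennreal (\<Sum>k. ak k * (fact n / (2 * real k + 1)^(n+1)))"
  proof (rule suminf_ennreal2)
    show "\<And>k. 0 \<le> ak k * (fact n / (2 * real k + 1)^(n+1))" using ak_nonneg by simp
    have "summable (\<lambda>k. fact n * (ak k / (2 * real k + 1)^(n+1)))"
      by (rule summable_mult) (rule summable_ak_pow)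
    then show "summable (\<lambda>k. ak k * (fact n / (2 * real k + 1)^(n+1)))" by (simp add: field_simps)
  qed
  also have "(\<Sum>k. ak k * (fact n / (2 * real k + 1)^(n+1))) = fact n * SS n"
    unfolding SS_def
    by (subst suminf_mult[OF summable_ak_pow, symmetric]) (simp add: field_simps)
  finally show ?thesis .
qed




lemma exp_neg_lt2 [simp]: "(x::real) < 0 \<Longrightarrow> exp x < 2"
proof -
  assume "x < 0" then have "exp x < 1" by simp
  then show ?thesis by linarith
qed

lemma Ls_value: "Ls (n+1) (pi/3) = (-1)^(n+1) * (fact n * SS n)"
proof -
  define f where "f = (\<lambda>\<theta>::real. (- ln \<bar>2 * sin (\<theta> / 2)\<bar>) ^ n)"
  define g where "g = (\<lambda>t::real. 2 * arcsin (exp t / 2))"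
  have u_bounds: "0 < exp x / 2" "exp x / 2 < 1/2" if "x < 0" for x :: real
    using that by auto
  have sa: "sin (arcsin (exp x / 2)) = exp x / 2" if "x < 0" for x :: real
    using u_bounds[OF that] by (intro sin_arcsin) linarith+
  have fg: "f (g x) = (-x)^n" if "x < 0" for x :: real
  proof -
    have "sin (g x / 2) = exp x / 2" unfolding g_def using u_bounds[OF that] by (simp add: sa)
    then have h: "2 * sin (g x / 2) = exp x" by simp
    show ?thesis by (simp only: f_def h) simp
  qed
  have deriv: "DERIV g x :> gd x" if "x < 0" for x :: real
  proof -
    have d1: "DERIV (\<lambda>x. exp x / 2) x :> exp x / 2"
      by (auto intro!: derivative_eq_intros)
    have d2: "DERIV arcsin (exp x / 2) :> inverse (sqrt (1 - (exp x / 2)\<^sup>2))"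
      using u_bounds[OF that] by (intro DERIV_arcsin) linarith+
    have "DERIV (\<lambda>x. arcsin (exp x / 2)) x :> inverse (sqrt (1 - (exp x / 2)\<^sup>2)) * (exp x / 2)"
      by (rule DERIV_chain2[OF d2 d1])
    then have "DERIV (\<lambda>x. 2 * arcsin (exp x / 2)) x :> 2 * (inverse (sqrt (1 - (exp x / 2)\<^sup>2)) * (exp x / 2))"
      by (rule DERIV_cmult)
    moreover have "2 * (inverse (sqrt (1 - (exp x / 2)\<^sup>2)) * (exp x / 2)) = gd x"
      by (simp add: gd_def field_simps)
    ultimately show ?thesis unfolding g_def by simp
  qed
  have gd_cont: "isCont gd x" if "x < 0" for x :: real
  proof -
    have "(exp x / 2)^2 < 1"
    proof -
      have "(exp x / 2)^2 < 1^2" using u_bounds[OF that] by (intro power_strict_mono) auto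
      then show ?thesis by simp
    qed
    then have "sqrt (1 - (exp x / 2)^2) \<noteq> 0" by simp
    then show ?thesis unfolding gd_def by (intro continuous_intros) auto
  qed
  have f_cont: "isCont f (g x)" if "x < 0" for x :: real
  proof -
    have "sin (g x / 2) = exp x / 2" unfolding g_def using u_bounds[OF that] by (simp add: sa)
    then have "2 * sin (g x / 2) \<noteq> 0" using exp_gt_zero[of x] by linarith
    then show ?thesis unfolding f_def by (intro continuous_intros) auto
  qed
  have g_at_bot: "(g \<longlongrightarrow> 0) at_bot"
  proof -
    have "((\<lambda>x::real. exp x / 2) \<longlongrightarrow> 0 / (2::real)) at_bot"
      by (intro tendsto_divide exp_at_bot tendsto_const) auto
    then have "((\<lambda>x::real. arcsin (exp x / 2)) \<longlongrightarrow> arcsin 0) at_bot"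
      by (intro isCont_tendsto_compose[OF isCont_arcsin]) auto
    then have "((\<lambda>x::real. 2 * arcsin (exp x / 2)) \<longlongrightarrow> 2 * arcsin 0) at_bot"
      by (intro tendsto_intros)
    then show ?thesis unfolding g_def by simp
  qed
  have g_at_0: "(g \<longlongrightarrow> pi/3) (at_left 0)"
  proof -
    have "isCont g 0" unfolding g_def
      by (intro continuous_intros isCont_o2[OF _ isCont_arcsin]) auto
    then have "(g \<longlongrightarrow> g 0) (at 0)" by (simp add: isCont_def)
    then have "(g \<longlongrightarrow> g 0) (at_left 0)" by (rule tendsto_mono[OF at_le, rotated]) simp
    moreover have "g 0 = pi/3" unfolding g_def by simp
    ultimately show ?thesis by simp
  qed
  have eint: "einterval (-\<infinity>) (ereal 0) = {..<0}"
    by (auto simp: einterval_def)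
  have fun_eq: "(\<lambda>x. indicator (einterval (-\<infinity>) (ereal 0)) x *\<^sub>R (f (g x) * gd x)) = (\<lambda>x. (-x)^n * gd x * indicator {..<0} x)"
    unfolding eint by (auto simp: fg indicator_def)
  have gd_nonneg: "gd x \<ge> 0" if "x \<le> 0" for x :: real
  proof -
    have "exp x \<le> 1" using that by simp
    then have "exp x / 2 \<le> 1" by linarith
    then have "(exp x / 2)^2 \<le> 1^2" by (intro power_mono) auto
    then show ?thesis by (simp add: gd_def)
  qed
  have hb: "has_bochner_integral lborel (\<lambda>x. (-x)^n * gd x * indicator {..<0} x) (fact n * SS n)"
  proof (rule has_bochner_integral_nn_integral)
    show "(\<lambda>x. (-x)^n * gd x * indicator {..<0} x) \<in> borel_measurable lborel"
      unfolding gd_def by measurable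
    show "AE x in lborel. 0 \<le> (-x)^n * gd x * indicator {..<0} x"
      using gd_nonneg by (auto simp: indicator_def)
    show "0 \<le> fact n * SS n" unfolding SS_def
      by (intro mult_nonneg_nonneg suminf_nonneg summable_ak_pow) (auto simp: ak_nonneg)
    show "(\<integral>\<^sup>+x. ennreal ((-x)^n * gd x * indicator {..<0} x) \<partial>lborel) = ennreal (fact n * SS n)"
      by (subst nn_main[symmetric]) (auto intro!: nn_integral_cong simp: indicator_def)
  qed
  have integ: "set_integrable lborel (einterval (-\<infinity>) (ereal 0)) (\<lambda>x. f (g x) * gd x)"
    unfolding set_integrable_def fun_eq using hb by (rule integrable.intros)
  have val: "(LBINT x=-\<infinity>..ereal 0. f (g x) * gd x) = fact n * SS n"
    unfolding interval_lebesgue_integral_def set_lebesgue_integral_def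
    using fun_eq has_bochner_integral_integral_eq[OF hb] by simp
  have subst: "(LBINT x=ereal 0..ereal (pi/3). f x) = (LBINT x=-\<infinity>..ereal 0. f (g x) * gd x)"
  proof (rule interval_integral_substitution_nonneg(2)[where g'=gd])
    show "-\<infinity> < ereal 0" by simp
    show "\<And>x. -\<infinity> < ereal x \<Longrightarrow> ereal x < ereal 0 \<Longrightarrow> DERIV g x :> gd x" using deriv by simp
    show "\<And>x. -\<infinity> < ereal x \<Longrightarrow> ereal x < ereal 0 \<Longrightarrow> isCont f (g x)" using f_cont by simp
    show "\<And>x. -\<infinity> < ereal x \<Longrightarrow> ereal x < ereal 0 \<Longrightarrow> isCont gd x" using gd_cont by simp
    show "\<And>x. -\<infinity> < ereal x \<Longrightarrow> ereal x < ereal 0 \<Longrightarrow> 0 \<le> f (g x)" using fg by simp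
    show "\<And>x. -\<infinity> \<le> ereal x \<Longrightarrow> ereal x \<le> ereal 0 \<Longrightarrow> 0 \<le> gd x" using gd_nonneg by simp
    show "((ereal \<circ> g \<circ> real_of_ereal) \<longlongrightarrow> ereal 0) (at_right (-\<infinity>))"
      unfolding at_right_MInf filterlim_filtermap using g_at_bot
      by (simp add: o_def tendsto_ereal)
    show "((ereal \<circ> g \<circ> real_of_ereal) \<longlongrightarrow> ereal (pi/3)) (at_left (ereal 0))"
      unfolding at_left_ereal filterlim_filtermap using g_at_0
      by (simp add: o_def tendsto_ereal)
    show "set_integrable lborel (einterval (-\<infinity>) (ereal 0)) (\<lambda>x. f (g x) * gd x)" by (rule integ)
  qed
  have sign: "(\<lambda>\<theta>. (ln \<bar>2 * sin (\<theta> / 2)\<bar>) ^ (n + 1 - 1)) = (\<lambda>\<theta>. (-1)^n * f \<theta>)"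
  proof
    fix \<theta> :: real
    have "(ln \<bar>2 * sin (\<theta> / 2)\<bar>) = (-1) * (- ln \<bar>2 * sin (\<theta> / 2)\<bar>)" by simp
    then show "(ln \<bar>2 * sin (\<theta> / 2)\<bar>) ^ (n + 1 - 1) = (-1)^n * f \<theta>"
      unfolding f_def by (metis add_diff_cancel_right' power_mult_distrib)
  qed
  have "Ls (n+1) (pi/3) = - ((-1)^n * (LBINT x=ereal 0..ereal (pi/3). f x))"
    unfolding Ls_def sign by (simp add: zero_ereal_def)
  also have "\<dots> = (-1)^(n+1) * (fact n * SS n)" unfolding subst val by simp
  finally show ?thesis .
qed




lemma poch_shift: "pochhammer (a+1) k * a = pochhammer a k * (a + of_nat k)"
  for a :: "'a::comm_semiring_1"
  using pochhammer_rec[of a k] pochhammer_Suc[of a k] by (simp add: mult.commute)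

lemma ratio_aux: "(p::complex) \<noteq> 0 \<Longrightarrow> p^(n+2) / (p*q)^(n+1) = p / q^(n+1)"
proof -
  assume p: "p \<noteq> 0"
  have "p^(n+2) / (p*q)^(n+1) = (p * p^(n+1)) / (p^(n+1) * q^(n+1))"
    by (simp add: power_mult_distrib)
  also have "\<dots> = p / q^(n+1)" using p by simp
  finally show ?thesis .
qed

lemma ak_complex: "complex_of_real (ak k) = pochhammer (1/2) k / fact k * (1/4)^k"
  by (simp add: ak_def poch_half power_divide)

lemma SS_nonneg: "SS n \<ge> 0"
  unfolding SS_def by (intro suminf_nonneg summable_ak_pow) (auto simp: ak_nonneg)

lemma powr_term: "2 powr (- 4 * real k) * real ((2 * k) choose k) = ak k"
proof -
  have "2 powr (- 4 * real k) = 1 / 2 ^ (4*k)"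
    by (simp add: powr_minus_divide powr_realpow[symmetric])
  also have "(2::real) ^ (4*k) = 4^k * 4^k"
  proof -
    have "(2::real) ^ (4*k) = (2^2)^(2*k)" unfolding power_mult[symmetric] by simp
    also have "\<dots> = 4^k * 4^k" by (simp add: mult_2 power_add)
    finally show ?thesis .
  qed
  finally show ?thesis by (simp add: ak_def)
qed

lemma part1_value: "(-1) ^ (n + 1) / fact n * Ls (n + 1) (pi / 3) = SS n"
proof -
  have "(-1) ^ (n + 1) / fact n * Ls (n + 1) (pi / 3) = ((-1) ^ (n + 1) * (-1) ^ (n + 1)) * (fact n / fact n) * SS n"
    unfolding Ls_value by simp
  also have "(-1::real) ^ (n + 1) * (-1) ^ (n + 1) = 1" by (simp add: power_mult_distrib[symmetric])
  finally show ?thesis by simp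
qed

lemma part1_hyp:
  "hypergeom (replicate (n + 2) (1/2)) (replicate (n + 1) (3/2)) (1/4) = complex_of_real (SS n)"
proof -
  have tm: "(\<Prod>a\<leftarrow>replicate (n + 2) (1/2::complex). pochhammer a k) /
      (\<Prod>b\<leftarrow>replicate (n + 1) (3/2::complex). pochhammer b k) * (1/4) ^ k / fact k
      = complex_of_real (ak k / (2 * real k + 1) ^ (n+1))" for k
  proof -
    let ?p = "pochhammer (1/2::complex) k"
    have p0: "?p \<noteq> 0"
    proof
      assume "?p = 0"
      then have "(of_nat ((2*k) choose k) :: complex) / 4^k = 0" by (simp add: poch_half[symmetric])
      moreover have "(2*k) choose k > 0" by simp
      ultimately show False by simp
    qed
    have p3: "pochhammer (3/2::complex) k = ?p * (2 * of_nat k + 1)"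
    proof -
      have "pochhammer (1/2 + 1::complex) k * (1/2) = ?p * (1/2 + of_nat k)" by (rule poch_shift)
      moreover have "(1/2 + 1::complex) = 3/2" by simp
      ultimately show ?thesis by (simp add: field_simps)
    qed
    have "(\<Prod>a\<leftarrow>replicate (n + 2) (1/2::complex). pochhammer a k) = ?p ^ (n+2)"
      by (simp add: prod_list_replicate)
    moreover have "(\<Prod>b\<leftarrow>replicate (n + 1) (3/2::complex). pochhammer b k) = (?p * (2 * of_nat k + 1)) ^ (n+1)"
      by (simp add: prod_list_replicate p3)
    ultimately have "(\<Prod>a\<leftarrow>replicate (n + 2) (1/2::complex). pochhammer a k) /
      (\<Prod>b\<leftarrow>replicate (n + 1) (3/2::complex). pochhammer b k) * (1/4) ^ k / fact k
       = (?p / fact k * (1/4)^k) / (2 * of_nat k + 1) ^ (n+1)"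
      using ratio_aux[OF p0, of n "2 * of_nat k + 1"] by simp
    also have "\<dots> = complex_of_real (ak k / (2 * real k + 1) ^ (n+1))"
      by (simp add: ak_complex)
    finally show ?thesis .
  qed
  show ?thesis unfolding hypergeom_def tm SS_def
    by (rule suminf_of_real[OF summable_ak_pow, symmetric])
qed

definition tk :: "complex \<Rightarrow> nat \<Rightarrow> complex" where
  "tk s k = complex_of_real (ak k) / (2 * of_nat k + 1 + s)"

lemma denom_bound: "norm (s::complex) < 1 \<Longrightarrow> 1 - norm s \<le> norm (2 * of_nat k + 1 + s)"
proof -
  assume s: "norm s < 1"
  have e: "(2 * of_nat k + 1 :: complex) = of_nat (2*k+1)" by simp
  have "norm (of_nat (2*k+1) :: complex) - norm s \<le> norm (of_nat (2*k+1) + s)"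
    by (rule norm_diff_ineq)
  then have "real (2*k+1) - norm s \<le> norm (2 * of_nat k + 1 + s)"
    unfolding e norm_of_nat .
  then show ?thesis by simp
qed

lemma summable_tk: assumes s: "norm s < 1" shows "summable (tk s)"
proof (rule summable_comparison_test')
  show "summable (\<lambda>k. (1/4::real)^k / (1 - norm s))"
    by (intro summable_divide summable_geometric) simp
  fix k
  have d: "1 - norm s \<le> norm (2 * of_nat k + 1 + s)" by (rule denom_bound[OF s])
  have "norm (tk s k) = ak k / norm (2 * of_nat k + 1 + s)"
    by (simp add: tk_def norm_divide ak_nonneg)
  also have "\<dots> \<le> ak k / (1 - norm s)"
    using d s ak_nonneg[of k] by (intro divide_left_mono) (auto intro!: mult_pos_pos)
  also have "\<dots> \<le> (1/4)^k / (1 - norm s)"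
    using s ak_le[of k] by (intro divide_right_mono) auto
  finally show "norm (tk s k) \<le> (1/4)^k / (1 - norm s)" .
qed

lemma hyp2: assumes s: "norm s < 1"
  shows "hypergeom [1/2, s/2 + 1/2] [s/2 + 3/2] (1/4) = (s+1) * suminf (tk s)"
proof -
  define a where "a = s/2 + 1/2"
  have Rea: "Re a > 0" using s abs_Re_le_cmod[of s] unfolding a_def by auto
  have tm: "pochhammer (1/2) k * pochhammer (s/2 + 1/2) k / pochhammer (s/2 + 3/2) k * (1/4) ^ k / fact k
      = (s+1) * tk s k" for k
  proof -
    have a1: "s/2 + 3/2 = a + 1" unfolding a_def by simp
    have pz: "pochhammer (a+1) k \<noteq> 0"
    proof
      assume "pochhammer (a+1) k = 0"
      then obtain j where "a + 1 = - of_nat j" by (auto simp: pochhammer_eq_0_iff)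
      then have "Re (a+1) = Re (- of_nat j)" by simp
      then show False using Rea by simp
    qed
    have az: "a + of_nat k \<noteq> 0"
    proof
      assume "a + of_nat k = 0"
      then have "Re (a + of_nat k) = 0" by simp
      then show False using Rea by simp
    qed
    have r: "pochhammer a k / pochhammer (a+1) k = a / (a + of_nat k)"
      using poch_shift[of a k] pz az by (simp add: field_simps)
    have d: "\<And>x y::complex. (x/2)/(y/2) = x/y" by simp
    have e1: "a = (s+1)/2" unfolding a_def by (simp add: field_simps)
    have e2: "a + of_nat k = (2 * of_nat k + 1 + s)/2" unfolding a_def by (simp add: field_simps)
    have "a / (a + of_nat k) = (s+1) / (2 * of_nat k + 1 + s)"
      unfolding e2 unfolding e1 by (rule d)
    then have r2: "pochhammer a k / pochhammer (a+1) k = (s+1) / (2 * of_nat k + 1 + s)" using r by simp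
    have gen: "\<And>P A B Q F :: complex. P * A / B * Q / F = (P / F * Q) * (A / B)"
      by (simp add: divide_inverse ac_simps)
    have "pochhammer (1/2) k * pochhammer (s/2 + 1/2) k / pochhammer (s/2 + 3/2) k * (1/4) ^ k / fact k
       = (pochhammer (1/2) k / fact k * (1/4)^k) * ((s+1) / (2 * of_nat k + 1 + s))"
      unfolding a1 a_def[symmetric] gen r2 ..
    also have "\<dots> = (s+1) * tk s k"
      by (simp add: tk_def ak_complex)
    finally show ?thesis .
  qed
  have "hypergeom [1/2, s/2 + 1/2] [s/2 + 3/2] (1/4) = (\<Sum>k. (s+1) * tk s k)"
    unfolding hypergeom_def
    by (simp only: list.map prod_list.Cons prod_list.Nil mult_1_right tm)
  also have "\<dots> = (s+1) * suminf (tk s)"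
    by (rule suminf_mult[OF summable_tk[OF s]])
  finally show ?thesis .
qed




definition FF :: "complex \<Rightarrow> nat \<Rightarrow> nat \<Rightarrow> complex" where
  "FF z n k = complex_of_real (ak k / (2 * real k + 1) ^ (n+1)) * z^n"

lemma series_s:
  assumes s: "norm s < 1"
  shows "(\<lambda>n. - (complex_of_real (Ls (n + 1) (pi / 3)) * s ^ n / fact n)) sums suminf (tk s)"
proof -
  define z where "z = -s"
  have nz: "norm z = norm s" unfolding z_def by simp
  have termeq: "- (complex_of_real (Ls (n + 1) (pi / 3)) * s ^ n / fact n) = (\<Sum>k. FF z n k)" for n
  proof -
    have "- (complex_of_real (Ls (n + 1) (pi / 3)) * s ^ n / fact n)
        = complex_of_real (SS n) * z^n"
    proof -
      have "- (complex_of_real (Ls (n + 1) (pi / 3)) * s ^ n / fact n)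
         = complex_of_real (- ((-1)^(n+1) * (fact n * SS n)) / fact n) * s^n"
        unfolding Ls_value by simp
      also have "- ((-1)^(n+1) * (fact n * SS n)) / fact n = (-1)^n * SS n"
        by simp
      also have "complex_of_real ((-1)^n * SS n) * s^n = complex_of_real (SS n) * z^n"
        unfolding z_def by (subst power_minus) simp
      finally show ?thesis .
    qed
    also have "\<dots> = (\<Sum>k. complex_of_real (ak k / (2 * real k + 1) ^ (n+1))) * z^n"
      unfolding SS_def by (subst suminf_of_real[OF summable_ak_pow]) simp
    also have "\<dots> = (\<Sum>k. FF z n k)"
      unfolding FF_def
      by (rule suminf_mult2) (rule summable_of_real[OF summable_ak_pow])
    finally show ?thesis .
  qed
  have summF: "summable (\<lambda>k. FF z n k)" for n
    unfolding FF_def by (intro summable_mult2) (rule summable_of_real[OF summable_ak_pow])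
  define A where "A = (\<lambda>k N. \<Sum>n<N. FF z n k)"
  have partial: "(\<Sum>n<N. \<Sum>k. FF z n k) = (\<Sum>k. A k N)" for N
    unfolding A_def by (rule suminf_sum[symmetric]) (rule summF)
  have lim: "(\<lambda>N. A k N) \<longlonglongrightarrow> tk s k" for k
  proof -
    define r where "r = (2 * of_nat k + 1 :: complex)"
    have nr: "norm r = 2 * real k + 1"
    proof -
      have "r = of_nat (2*k+1)" unfolding r_def by simp
      then show ?thesis by (simp only: norm_of_nat)
    qed
    have r0: "r \<noteq> 0" using nr by auto
    have "norm (z / r) < 1"
    proof -
      have "norm (z / r) = norm s / (2 * real k + 1)" by (simp add: norm_divide nr nz)
      also have "\<dots> \<le> norm s" using divide_left_mono[of 1 "2 * real k + 1" "norm s"] by simp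
      finally show ?thesis using s by linarith
    qed
    then have "(\<lambda>n. (z/r)^n) sums (1 / (1 - z/r))" by (rule geometric_sums)
    then have "(\<lambda>n. (complex_of_real (ak k) / r) * (z/r)^n) sums ((complex_of_real (ak k) / r) * (1 / (1 - z/r)))"
      by (rule sums_mult)
    moreover have "(complex_of_real (ak k) / r) * (1 / (1 - z/r)) = tk s k"
    proof -
      have "r - z \<noteq> 0"
      proof
        assume "r - z = 0" then have "norm r = norm z" by simp
        then show False using nr nz s by simp
      qed
      then have "(complex_of_real (ak k) / r) * (1 / (1 - z/r)) = complex_of_real (ak k) / (r - z)"
        using r0 by (simp add: field_simps)
      also have "r - z = 2 * of_nat k + 1 + s" unfolding r_def z_def by simp
      finally show ?thesis unfolding tk_def .
    qed
    moreover have "(complex_of_real (ak k) / r) * (z/r)^n = FF z n k" for n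
      unfolding FF_def r_def by (simp add: power_divide field_simps)
    ultimately have "(\<lambda>n. FF z n k) sums tk s k" by simp
    then show ?thesis unfolding A_def sums_def .
  qed
  have bound: "norm (A k N) \<le> ak k / (1 - norm s)" for k N
  proof -
    have "norm (A k N) \<le> (\<Sum>n<N. norm (FF z n k))" unfolding A_def by (rule norm_sum)
    also have "\<dots> \<le> (\<Sum>n<N. ak k * norm s ^ n)"
    proof (rule sum_mono)
      fix n
      have "norm (FF z n k) = ak k / (2 * real k + 1) ^ (n+1) * norm s ^ n"
      proof -
        have x0: "ak k / (2 * real k + 1) ^ (n+1) \<ge> 0" by (simp add: ak_nonneg)
        show ?thesis by (simp only: FF_def norm_mult norm_of_real norm_power nz abs_of_nonneg[OF x0])
      qed
      also have "\<dots> \<le> ak k * norm s ^ n"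
      proof -
        have p1: "1 \<le> (2 * real k + 1) ^ (n+1)" by (intro one_le_power) simp
        have "ak k / (2 * real k + 1) ^ (n+1) \<le> ak k / 1"
          by (rule divide_left_mono[OF p1 ak_nonneg]) (use p1 in simp)
        then show ?thesis by (intro mult_right_mono) auto
      qed
      finally show "norm (FF z n k) \<le> ak k * norm s ^ n" .
    qed
    also have "\<dots> = ak k * (\<Sum>n<N. norm s ^ n)" by (simp add: sum_distrib_left)
    also have "(\<Sum>n<N. norm s ^ n) \<le> (\<Sum>n. norm s ^ n)"
      by (rule sum_le_suminf) (use s in \<open>auto intro!: summable_geometric\<close>)
    also have "(\<Sum>n. norm s ^ n) = 1 / (1 - norm s)"
      by (rule suminf_geometric) (use s in simp)
    finally show ?thesis using ak_nonneg[of k] by (simp add: mult_left_mono)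
  qed
  have "eventually (\<lambda>n. summable (\<lambda>k. norm (A k n))) sequentially \<and>
        summable (\<lambda>n. norm (tk s n)) \<and>
        ((\<lambda>n. suminf (\<lambda>k. A k n)) \<longlongrightarrow> suminf (tk s)) sequentially"
  proof (rule tannerys_theorem[where M = "\<lambda>k. ak k / (1 - norm s)"])
    show "\<And>k. (\<lambda>n. A k n) \<longlonglongrightarrow> tk s k" by (rule lim)
    show "\<forall>\<^sub>F (k, n) in at_top \<times>\<^sub>F sequentially. norm (A k n) \<le> ak k / (1 - norm s)"
      by (rule always_eventually) (auto simp: bound)
    show "summable (\<lambda>k. ak k / (1 - norm s))"
      using summable_ak_pow[of 0] by (intro summable_divide) simp
  qed simp
  then have "(\<lambda>N. \<Sum>n<N. \<Sum>k. FF z n k) \<longlonglongrightarrow> suminf (tk s)"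
    unfolding partial by simp
  then show ?thesis unfolding sums_def termeq .
qed




theorem theorem2p11:
  shows "(\<forall>n::nat.
            complex_of_real ((-1) ^ (n + 1) / fact n * Ls (n + 1) (pi / 3))
              = hypergeom (replicate (n + 2) (1/2)) (replicate (n + 1) (3/2)) (1/4)
          \<and> (\<lambda>k. 2 powr (- 4 * real k) / (2 * real k + 1) ^ (n + 1) * real ((2 * k) choose k))
              sums ((-1) ^ (n + 1) / fact n * Ls (n + 1) (pi / 3)))
       \<and> (\<forall>s::complex. norm s < 1 \<longrightarrow>
            (\<lambda>n. - (complex_of_real (Ls (n + 1) (pi / 3)) * s ^ n / fact n))
              sums (1 / (s + 1) * hypergeom [1/2, s/2 + 1/2] [s/2 + 3/2] (1/4))
          \<and> (\<lambda>k. complex_of_real (2 powr (- 4 * real k) * real ((2 * k) choose k)) / (2 * of_nat k + 1 + s))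
              sums (1 / (s + 1) * hypergeom [1/2, s/2 + 1/2] [s/2 + 3/2] (1/4)))"
proof (intro conjI allI impI)
  fix n :: nat
  show "complex_of_real ((-1) ^ (n + 1) / fact n * Ls (n + 1) (pi / 3))
              = hypergeom (replicate (n + 2) (1/2)) (replicate (n + 1) (3/2)) (1/4)"
    unfolding part1_value part1_hyp ..
  have "(\<lambda>k. 2 powr (- 4 * real k) / (2 * real k + 1) ^ (n + 1) * real ((2 * k) choose k))
      = (\<lambda>k. ak k / (2 * real k + 1) ^ (n + 1))"
  proof
    fix k
    show "2 powr (- 4 * real k) / (2 * real k + 1) ^ (n + 1) * real ((2 * k) choose k) = ak k / (2 * real k + 1) ^ (n + 1)"
      using powr_term[of k] by (simp add: field_simps)
  qed
  then show "(\<lambda>k. 2 powr (- 4 * real k) / (2 * real k + 1) ^ (n + 1) * real ((2 * k) choose k))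
              sums ((-1) ^ (n + 1) / fact n * Ls (n + 1) (pi / 3))"
    unfolding part1_value SS_def by (simp only:) (rule summable_sums[OF summable_ak_pow])
next
  fix s :: complex
  assume s: "norm s < 1"
  have s1: "s + 1 \<noteq> 0"
  proof
    assume "s + 1 = 0" then have "s = -1" by (metis add.commute add_eq_0_iff)
    then show False using s by simp
  qed
  have eq: "1 / (s + 1) * hypergeom [1/2, s/2 + 1/2] [s/2 + 3/2] (1/4) = suminf (tk s)"
    unfolding hyp2[OF s] using s1 by simp
  show "(\<lambda>n. - (complex_of_real (Ls (n + 1) (pi / 3)) * s ^ n / fact n))
              sums (1 / (s + 1) * hypergeom [1/2, s/2 + 1/2] [s/2 + 3/2] (1/4))"
    unfolding eq by (rule series_s[OF s])
  have "(\<lambda>k. complex_of_real (2 powr (- 4 * real k) * real ((2 * k) choose k)) / (2 * of_nat k + 1 + s)) = tk s"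
    unfolding powr_term tk_def ..
  then show "(\<lambda>k. complex_of_real (2 powr (- 4 * real k) * real ((2 * k) choose k)) / (2 * of_nat k + 1 + s))
              sums (1 / (s + 1) * hypergeom [1/2, s/2 + 1/2] [s/2 + 3/2] (1/4))"
    unfolding eq using summable_sums[OF summable_tk[OF s]] by simp
qed


end
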